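(* Let $P$ be a poset and $v$ an assignment of variables to elements of $P$. Then for all $n\in\omega$ and $1\leq k,r,s<\omega$: $P,v\models\phi_{krsn}(x_1,\ldots,x_k,y)$ if and only if $\exists$ has an $n$-strategy for the $(\alpha,\beta)$-game with starting position $(\{v(x_1),\ldots,v(x_k)\},\{v(y)\})$ for all $2\leq\alpha\leq r+1$ and $2\leq\beta\leq s+1$.
   Context: Work in the first-order signature with one binary relation $\leq$; write $\vec{x}_k=(x_1,\ldots,x_k)$. For $1\leq k<\omega$: $J_k(\vec{x}_k,y)$ is a formula holding under $v$ iff $v(y)$ is the join of $\{v(x_1),\ldots,v(x_k)\}$, and $M_k(\vec{x}_k,y)$ iff $v(y)$ is their meet; $C_k(\vec{x}_k,y)=\bigvee_{i=1}^k(y=x_i)$ and $D_k=\neg C_k$; $C_{km}(\vec{x}_k,\vec{y}_m)$ holds iff $\{v(y_1),\ldots,v(y_m)\}\subseteq\{v(x_1),\ldots,v(x_k)\}$. Define $\sigma_k(\vec{x}_k,c)=\exists z(C_k(\vec{x}_k,z)\wedge z\leq c)$, $\tau_{kr}(\vec{x}_k,\vec{a}_r,c)=C_{kr}(\vec{x}_k,\vec{a}_r)\wedge M_r(\vec{a}_r,c)$, $\rho_{ks}(\vec{x}_k,\vec{b}_s)=\exists z(C_k(\vec{x}_k,z)\wedge J_s(\vec{b}_s,z))$. Define recursively $\phi_{krs0}(\vec{x}_k,y)=D_k(\vec{x}_k,y)$ and $\phi_{krs(n+1)}(\vec{x}_k,y)=\forall\vec{a}_r\forall\vec{b}_s\forall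 c\Big(\big(\sigma_k(\vec{x}_k,c)\to\phi_{(k+1)rsn}(\vec{x}_k,c,y)\big)\wedge\big(\tau_{kr}(\vec{x}_k,\vec{a}_r,c)\to\phi_{(k+1)rsn}(\vec{x}_k,c,y)\big)\wedge\big(\rho_{ks}(\vec{x}_k,\vec{b}_s)\to\bigvee_{i=1}^s\phi_{(k+1)rsn}(\vec{x}_k,b_i,y)\big)\Big)$. The $(\alpha,\beta)$-game on $P$ with starting position $(U_0,V)$ is played between $\forall$ and $\exists$ in rounds $0,1,2,\ldots$; a set $U$ is maintained, initially $U_0$, with $V$ fixed. Each round $\forall$ moves and $\exists$ responds: (1) if $b\geq a$ for some $a\in U$, $\forall$ may play $(b)$ and $\exists$ must add $b$ to $U$; (2) if $A\subseteq U$ with $|A|<\alpha$ and $\bigwedge A$ exists in $P$, $\forall$ may play $A$ and $\exists$ must add $\bigwedge A$ to $U$; (3) if $B\subseteq P$ with $|B|<\beta$ and $\bigvee B$ exists and lies in $U$, $\forall$ may play $B$ and $\exists$ must choose some $b\in B$ and add it to $U$. $\forall$ wins in round $n$ if $U\cap V\neq\emptyset$ at the beginning of round $n$. $\exists$ has an $n$-strategy if she can guarantee that $\forall$ does not win until at least round $n+1$. *)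

theory Defs
  imports Main
begin

text \<open>The poset P is modelled as a type of class order. Variables x_1..x_k are
  modelled by a function x :: nat => 'a (only the values at 1..k matter).\<close>

definition is_meet :: "'a::order set \<Rightarrow> 'a \<Rightarrow> bool" where
  "is_meet A m \<longleftrightarrow> (\<forall>a\<in>A. m \<le> a) \<and> (\<forall>z. (\<forall>a\<in>A. z \<le> a) \<longrightarrow> z \<le> m)"

definition is_join :: "'a::order set \<Rightarrow> 'a \<Rightarrow> bool" where
  "is_join B j \<longleftrightarrow> (\<forall>b\<in>B. b \<le> j) \<and> (\<forall>z. (\<forall>b\<in>B. b \<le> z) \<longrightarrow> j \<le> z)"

definition C_k :: "nat \<Rightarrow> (nat \<Rightarrow> 'a) \<Rightarrow> 'a \<Rightarrow> bool" where
  "C_k k x y \<longleftrightarrow> (\<exists>i\<in>{1..k}. y = x i)"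

definition D_k :: "nat \<Rightarrow> (nat \<Rightarrow> 'a) \<Rightarrow> 'a \<Rightarrow> bool" where
  "D_k k x y \<longleftrightarrow> \<not> C_k k x y"

definition C_km :: "nat \<Rightarrow> nat \<Rightarrow> (nat \<Rightarrow> 'a) \<Rightarrow> (nat \<Rightarrow> 'a) \<Rightarrow> bool" where
  "C_km k m x y \<longleftrightarrow> y ` {1..m} \<subseteq> x ` {1..k}"

definition M_k :: "nat \<Rightarrow> (nat \<Rightarrow> 'a::order) \<Rightarrow> 'a \<Rightarrow> bool" where
  "M_k k x y \<longleftrightarrow> is_meet (x ` {1..k}) y"

definition J_k :: "nat \<Rightarrow> (nat \<Rightarrow> 'a::order) \<Rightarrow> 'a \<Rightarrow> bool" where
  "J_k k x y \<longleftrightarrow> is_join (x ` {1..k}) y"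

definition sigma_k :: "nat \<Rightarrow> (nat \<Rightarrow> 'a::order) \<Rightarrow> 'a \<Rightarrow> bool" where
  "sigma_k k x c \<longleftrightarrow> (\<exists>z. C_k k x z \<and> z \<le> c)"

definition tau_kr :: "nat \<Rightarrow> nat \<Rightarrow> (nat \<Rightarrow> 'a::order) \<Rightarrow> (nat \<Rightarrow> 'a) \<Rightarrow> 'a \<Rightarrow> bool" where
  "tau_kr k r x a c \<longleftrightarrow> C_km k r x a \<and> M_k r a c"

definition rho_ks :: "nat \<Rightarrow> nat \<Rightarrow> (nat \<Rightarrow> 'a::order) \<Rightarrow> (nat \<Rightarrow> 'a) \<Rightarrow> bool" where
  "rho_ks k s x b \<longleftrightarrow> (\<exists>z. C_k k x z \<and> J_k s b z)"

text \<open>Satisfaction of phi_{krsn}(x_1..x_k, y): the tuple (x_1..x_k, c) is x(k+1 := c).\<close>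

fun phi :: "nat \<Rightarrow> nat \<Rightarrow> nat \<Rightarrow> nat \<Rightarrow> (nat \<Rightarrow> 'a::order) \<Rightarrow> 'a \<Rightarrow> bool" where
  "phi k r s 0 x y = D_k k x y"
| "phi k r s (Suc n) x y =
     (\<forall>a b c.
        (sigma_k k x c \<longrightarrow> phi (k+1) r s n (x(k+1 := c)) y) \<and>
        (tau_kr k r x a c \<longrightarrow> phi (k+1) r s n (x(k+1 := c)) y) \<and>
        (rho_ks k s x b \<longrightarrow> (\<exists>i\<in>{1..s}. phi (k+1) r s n (x(k+1 := b i)) y)))"

text \<open>If she cannot respond to a legal move she loses.\<close>

fun exists_strategy :: "nat \<Rightarrow> nat \<Rightarrow> nat \<Rightarrow> 'a::order set \<Rightarrow> 'a set \<Rightarrow> bool" where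
  "exists_strategy \<alpha> \<beta> 0 U V = (U \<inter> V = {})"
| "exists_strategy \<alpha> \<beta> (Suc n) U V =
     (U \<inter> V = {} \<and>
      (\<forall>a b. a \<in> U \<and> a \<le> b \<longrightarrow> exists_strategy \<alpha> \<beta> n (insert b U) V) \<and>
      (\<forall>A m. A \<subseteq> U \<and> finite A \<and> card A < \<alpha> \<and> is_meet A m
              \<longrightarrow> exists_strategy \<alpha> \<beta> n (insert m U) V) \<and>
      (\<forall>B j. finite B \<and> card B < \<beta> \<and> is_join B j \<and> j \<in> U
              \<longrightarrow> (\<exists>b\<in>B. exists_strategy \<alpha> \<beta> n (insert b U) V)))"

end

theory Submission
  imports Defs
begin

lemma es_mono:
  "exists_strategy \<alpha> \<beta> n U V \<Longrightarrow> \<alpha>' \<le> \<alpha> \<Longrightarrow> \<beta>' \<le> \<beta> \<Longrightarrow> exists_strategy \<alpha>' \<beta>' n U V"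
proof (induction n arbitrary: U)
  case 0 then show ?case by simp
next
  case (Suc n)
  have h: "exists_strategy \<alpha> \<beta> (Suc n) U V" "\<alpha>' \<le> \<alpha>" "\<beta>' \<le> \<beta>" by fact+
  show ?case
    unfolding exists_strategy.simps
  proof (intro conjI allI impI)
    show "U \<inter> V = {}" using h(1) by (simp only: exists_strategy.simps)
  next
    fix a b assume "a \<in> U \<and> a \<le> b"
    then have "exists_strategy \<alpha> \<beta> n (insert b U) V" using h(1) by (simp only: exists_strategy.simps)
    then show "exists_strategy \<alpha>' \<beta>' n (insert b U) V" using h Suc.IH by blast
  next
    fix A m assume A: "A \<subseteq> U \<and> finite A \<and> card A < \<alpha>' \<and> is_meet A m"
    then have "card A < \<alpha>" using h(2) by linarith
    then have "exists_strategy \<alpha> \<beta> n (insert m U) V" using h(1) A by (simp only: exists_strategy.simps) blast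
    then show "exists_strategy \<alpha>' \<beta>' n (insert m U) V" using h Suc.IH by blast
  next
    fix B j assume B: "finite B \<and> card B < \<beta>' \<and> is_join B j \<and> j \<in> U"
    then have "card B < \<beta>" using h(3) by linarith
    have cl: "\<forall>B j. finite B \<and> card B < \<beta> \<and> is_join B j \<and> j \<in> U
              \<longrightarrow> (\<exists>b\<in>B. exists_strategy \<alpha> \<beta> n (insert b U) V)" using h(1) unfolding exists_strategy.simps by (elim conjE)
    have "\<exists>b\<in>B. exists_strategy \<alpha> \<beta> n (insert b U) V" using cl B \<open>card B < \<beta>\<close> by blast
    then obtain b where "b \<in> B" "exists_strategy \<alpha> \<beta> n (insert b U) V" by blast
    then show "\<exists>b\<in>B. exists_strategy \<alpha>' \<beta>' n (insert b U) V" using h Suc.IH by blast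
  qed
qed

lemma es_lose: "y \<in> U \<Longrightarrow> \<not> exists_strategy \<alpha> \<beta> n U {y}"
  by (cases n) auto

lemma img_upd: "(x((k::nat)+1:=c)) ` {1..k+1} = insert c (x ` {1..k})"
proof -
  have "{1..k+1} = insert (k+1) {1..k}" using atLeastAtMostSuc_conv[of 1 "k::nat"] by simp
  moreover have "(x(k+1:=c)) ` {1..k} = x ` {1..k}" by auto
  ultimately show ?thesis by (simp only: image_insert fun_upd_same)
qed

lemma enum:
  assumes "finite A" "A \<noteq> {}" "card A \<le> r"
  shows "\<exists>a::nat \<Rightarrow> 'a. a ` {1..r} = A"
proof -
  obtain f where f: "bij_betw f {0..<card A} A" using ex_bij_betw_nat_finite[OF assms(1)] by blast
  have cA: "card A > 0" using assms by auto
  define a where "a i = (if i \<le> card A then f (i - 1) else f 0)" for i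
  have "a ` {1..r} = A"
  proof
    show "a ` {1..r} \<subseteq> A"
    proof
      fix z assume "z \<in> a ` {1..r}"
      then obtain i where i: "i \<in> {1..r}" "z = a i" by auto
      show "z \<in> A"
      proof (cases "i \<le> card A")
        case True
        then have "i - 1 \<in> {0..<card A}" using i by auto
        then show ?thesis using f i True unfolding a_def bij_betw_def by auto
      next
        case False
        then show ?thesis using f i cA unfolding a_def bij_betw_def by auto
      qed
    qed
  next
    show "A \<subseteq> a ` {1..r}"
    proof
      fix z assume "z \<in> A"
      then obtain j where j: "j \<in> {0..<card A}" "z = f j" using f unfolding bij_betw_def by (metis imageE)
      have "a (j+1) = z" using j unfolding a_def by auto
      moreover have "j + 1 \<in> {1..r}" using j assms by auto
      ultimately show "z \<in> a ` {1..r}" by force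
    qed
  qed
  then show ?thesis by blast
qed

lemma card_img_le: "card ((a::nat \<Rightarrow> 'a) ` {1..r}) \<le> r"
  using card_image_le[of "{1..r}" a] by simp

lemma main:
  assumes "1 \<le> k"
  shows "phi k r s n x y \<longleftrightarrow> exists_strategy (Suc r) (Suc s) n (x ` {1..k}) {y}"
  using assms
proof (induction n arbitrary: k x)
  case 0
  then show ?case by (auto simp: D_k_def C_k_def)
next
  case (Suc n)
  have IH: "\<And>c. phi (k+1) r s n (x(k+1:=c)) y \<longleftrightarrow>
     exists_strategy (Suc r) (Suc s) n (insert c (x ` {1..k})) {y}"
    using Suc.IH[of "k+1"] img_upd[of x k] by (simp del: Suc_eq_plus1 One_nat_def fun_upd_apply)
  have Ck: "\<And>z. C_k k x z \<longleftrightarrow> z \<in> x ` {1..k}" unfolding C_k_def by auto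
  show ?case
  proof
    assume ph: "phi k r s (Suc n) x y"
    have sig: "\<And>c. (\<exists>z\<in>x ` {1..k}. z \<le> c) \<Longrightarrow> exists_strategy (Suc r) (Suc s) n (insert c (x ` {1..k})) {y}"
      using ph IH by (simp add: sigma_k_def Ck)
    have disj: "x ` {1..k} \<inter> {y} = {}"
    proof (rule ccontr)
      assume "x ` {1..k} \<inter> {y} \<noteq> {}"
      then have "y \<in> x ` {1..k}" by auto
      then have "exists_strategy (Suc r) (Suc s) n (insert y (x ` {1..k})) {y}" using sig by blast
      then show False using es_lose by blast
    qed
    have x1: "x 1 \<in> x ` {1..k}" using Suc.prems by auto
    show "exists_strategy (Suc r) (Suc s) (Suc n) (x ` {1..k}) {y}"
      unfolding exists_strategy.simps
    proof (intro conjI allI impI)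
      show "x ` {1..k} \<inter> {y} = {}" by fact
    next
      fix a b assume "a \<in> x ` {1..k} \<and> a \<le> b"
      then show "exists_strategy (Suc r) (Suc s) n (insert b (x ` {1..k})) {y}" using sig by blast
    next
      fix A m assume A: "A \<subseteq> x ` {1..k} \<and> finite A \<and> card A < Suc r \<and> is_meet A m"
      show "exists_strategy (Suc r) (Suc s) n (insert m (x ` {1..k})) {y}"
      proof (cases "A = {}")
        case True
        then have "x 1 \<le> m" using A unfolding is_meet_def by auto
        then show ?thesis using sig x1 by blast
      next
        case False
        then obtain a where a: "a ` {1..r} = A" using enum[of A r] A by auto
        have "tau_kr k r x a m" unfolding tau_kr_def C_km_def M_k_def using a A by auto
        then show ?thesis using ph IH by auto
      qed
    next
      fix B j assume B: "finite B \<and> card B < Suc s \<and> is_join B j \<and> j \<in> x ` {1..k}"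
      show "\<exists>b\<in>B. exists_strategy (Suc r) (Suc s) n (insert b (x ` {1..k})) {y}"
      proof (cases "B = {}")
        case True
        then have "j \<le> y" using B unfolding is_join_def by auto
        then have "exists_strategy (Suc r) (Suc s) n (insert y (x ` {1..k})) {y}" using sig B by blast
        then show ?thesis using es_lose by blast
      next
        case False
        then obtain b where b: "b ` {1..s} = B" using enum[of B s] B by auto
        have "rho_ks k s x b" unfolding rho_ks_def J_k_def Ck using b B by auto
        then obtain i where "i \<in> {1..s}" "phi (k+1) r s n (x(k+1 := b i)) y" using ph unfolding phi.simps by blast
        then show ?thesis using IH b by auto
      qed
    qed
  next
    assume es: "exists_strategy (Suc r) (Suc s) (Suc n) (x ` {1..k}) {y}"
    show "phi k r s (Suc n) x y"
      unfolding phi.simps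
    proof (intro allI conjI impI)
      fix c assume "sigma_k k x c"
      then obtain z where "z \<in> x ` {1..k}" "z \<le> c" by (auto simp: sigma_k_def Ck)
      then have "exists_strategy (Suc r) (Suc s) n (insert c (x ` {1..k})) {y}"
        using es by (simp only: exists_strategy.simps)
      then show "phi (k + 1) r s n (x(k + 1 := c)) y" using IH by blast
    next
      fix a c assume t: "tau_kr k r x a c"
      have "a ` {1..r} \<subseteq> x ` {1..k} \<and> finite (a ` {1..r}) \<and> card (a ` {1..r}) < Suc r \<and> is_meet (a ` {1..r}) c"
        using t card_img_le[of a r] unfolding tau_kr_def C_km_def M_k_def by auto
      then have "exists_strategy (Suc r) (Suc s) n (insert c (x ` {1..k})) {y}"
        using es unfolding exists_strategy.simps by blast
      then show "phi (k + 1) r s n (x(k + 1 := c)) y" using IH by blast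
    next
      fix b assume "rho_ks k s x b"
      then obtain z where z: "z \<in> x ` {1..k}" "is_join (b ` {1..s}) z" unfolding rho_ks_def J_k_def Ck by auto
      have "finite (b ` {1..s}) \<and> card (b ` {1..s}) < Suc s \<and> is_join (b ` {1..s}) z \<and> z \<in> x ` {1..k}"
        using z card_img_le[of b s] by auto
      moreover have cl: "\<forall>B j. finite B \<and> card B < Suc s \<and> is_join B j \<and> j \<in> x ` {1..k}
              \<longrightarrow> (\<exists>b\<in>B. exists_strategy (Suc r) (Suc s) n (insert b (x ` {1..k})) {y})"
        using es unfolding exists_strategy.simps by (elim conjE)
      ultimately have "\<exists>w\<in>b ` {1..s}. exists_strategy (Suc r) (Suc s) n (insert w (x ` {1..k})) {y}"
        by blast
      then obtain w where "w \<in> b ` {1..s}" "exists_strategy (Suc r) (Suc s) n (insert w (x ` {1..k})) {y}"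
        by blast
      then show "\<exists>i\<in>{1..s}. phi (k + 1) r s n (x(k + 1 := b i)) y" using IH by auto
    qed
  qed
qed

theorem lemma5p3:
  fixes x :: "nat \<Rightarrow> 'a::order" and y :: 'a and k r s n :: nat
  assumes "1 \<le> k" and "1 \<le> r" and "1 \<le> s"
  shows "phi k r s n x y \<longleftrightarrow>
    (\<forall>\<alpha> \<beta>. 2 \<le> \<alpha> \<and> \<alpha> \<le> r + 1 \<and> 2 \<le> \<beta> \<and> \<beta> \<le> s + 1 \<longrightarrow>
        exists_strategy \<alpha> \<beta> n (x ` {1..k}) {y})"
proof
  assume "phi k r s n x y"
  then have "exists_strategy (Suc r) (Suc s) n (x ` {1..k}) {y}" using main assms by blast
  then show "\<forall>\<alpha> \<beta>. 2 \<le> \<alpha> \<and> \<alpha> \<le> r + 1 \<and> 2 \<le> \<beta> \<and> \<beta> \<le> s + 1 \<longrightarrow>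
        exists_strategy \<alpha> \<beta> n (x ` {1..k}) {y}" using es_mono by auto
next
  assume "\<forall>\<alpha> \<beta>. 2 \<le> \<alpha> \<and> \<alpha> \<le> r + 1 \<and> 2 \<le> \<beta> \<and> \<beta> \<le> s + 1 \<longrightarrow>
        exists_strategy \<alpha> \<beta> n (x ` {1..k}) {y}"
  then have "exists_strategy (Suc r) (Suc s) n (x ` {1..k}) {y}" using assms by auto
  then show "phi k r s n x y" using main assms by blast
qed

end
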